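(* Let $G$ be a looped simple graph, $S$ a subtransversal of $W(G)$, and $\nu\ge 0$ an integer. Then $\nu$ equals the nullity $|S|-r(S)$ of $S$ in $M[IAS(G)]$ if and only if there exist a looped simple graph $H$ locally equivalent to $G$, a stable set $X\subseteq V(H)$ with $|X|=\nu$, and an induced isomorphism $\beta:M[IAS(G)]\to M[IAS(H)]$ such that $$\bigcup_{x\in X}\zeta_H(x)\subseteq\beta(S)\subseteq\{\phi_H(v):v\in V(H)\setminus X\}\cup\bigcup_{x\in X}\zeta_H(x).$$
   Context: A looped simple graph is a finite graph in which each vertex carries at most one loop and no two distinct vertices are joined by more than one edge. "Adjacent"/"neighbors" refer only to distinct vertices joined by a non-loop edge; $N_G(v)$ is the set of neighbors of $v$; a stable set is a set of vertices no two of which are adjacent. $A(G)$ is the $V(G)\times V(G)$ matrix over $GF(2)$ with diagonal entry $1$ exactly at looped vertices and off-diagonal entry $1$ exactly for adjacent pairs. $IAS(G)=(I\mid A(G)\mid A(G)+I)$ over $GF(2)$, rows indexed by $V(G)$; the $v$-columns of the three blocks are labelled $\phi_G(v),\chi_G(v),\psi_G(v)$. $M[IAS(G)]$ is the binary column matroid of $IAS(G)$ on $W(G)=\{\phi_G(v),\chi_G(v),\psi_G(v):v\in V(G)\}$, with rank function $r$. The vertex triple of $v$ is $\tau_G(v)=\{\phi_G(v),\chi_G(v),\psi_G(v)\}$; a subtransversal meets each vertex triple in at most one element. Neighborhood circuit: $\zeta_G(v)=\{\chi_G(v)\}\cup\{\phi_G(w):w\in N_G(v)\}$ if $v$ is unlooped,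 and $\{\psi_G(v)\}\cup\{\phi_G(w):w\in N_G(v)\}$ if $v$ is looped. Local equivalence: $G_\ell^v$ complements the loop status of $v$; $G_s^v$ complements the adjacency status of every pair of distinct neighbors of $v$; $G_{ns}^v$ does this and also complements the loop status of every neighbor of $v$. $H$ is locally equivalent to $G$ if obtained from $G$ by a finite sequence of such operations. Induced isomorphisms: for each such operation producing $G'$ from $G$ there is a matroid isomorphism $M[IAS(G)]\to M[IAS(G')]$ sending $\alpha_G(x)\mapsto\alpha_{G'}(x)$ for all $\alpha\in\{\phi,\chi,\psi\}$, $x\in V(G)$, except: for $G'=G_\ell^v$, $\chi_G(v)\mapsto\psi_{G'}(v)$, $\psi_G(v)\mapsto\chi_{G'}(v)$; for $G'=G_{ns}^v$ with $v$ unlooped, $\phi_G(v)\mapsto\psi_{G'}(v)$, $\psi_G(v)\mapsto\phi_{G'}(v)$, and with $v$ looped, $\phi_G(v)\mapsto\chi_{G'}(v)$, $\chi_G(v)\mapsto\phi_{G'}(v)$; for $G'=G_s^v$, the same exchange at $v$ as for $G_{ns}^v$ and in addition, for every $w\in N_G(v)$, $\chi_G(w)\mapsto\psi_{G'}(w)$, $\psi_G(w)\mapsto\chi_{G'}(w)$. An induced isomorphism $M[IAS(G)]\to M[IAS(H)]$ is a composition of such isomorphisms along a sequence of operations transforming $G$ into $H$. *)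

theory Defs
  imports Main
begin

record 'v lgraph =
  verts :: "'v set"
  loops :: "'v set"
  adj   :: "'v \<Rightarrow> 'v \<Rightarrow> bool"

definition lsg :: "('v, 'b) lgraph_scheme \<Rightarrow> bool" where
  "lsg G \<longleftrightarrow> finite (verts G) \<and> loops G \<subseteq> verts G
     \<and> (\<forall>u w. adj G u w \<longrightarrow> adj G w u)
     \<and> (\<forall>u. \<not> adj G u u)
     \<and> (\<forall>u w. adj G u w \<longrightarrow> u \<in> verts G \<and> w \<in> verts G)"

definition nbhd :: "'v lgraph \<Rightarrow> 'v \<Rightarrow> 'v set" where
  "nbhd G v = {w. adj G v w}"

definition stable :: "'v lgraph \<Rightarrow> 'v set \<Rightarrow> bool" where
  "stable G X \<longleftrightarrow> (\<forall>x\<in>X. \<forall>y\<in>X. \<not> adj G x y)"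

datatype tag = Phi | Chi | Psi

type_synonym 'v welem = "tag \<times> 'v"

definition W :: "'v lgraph \<Rightarrow> 'v welem set" where
  "W G = UNIV \<times> verts G"

definition vtriple :: "'v \<Rightarrow> 'v welem set" where
  "vtriple v = {(Phi, v), (Chi, v), (Psi, v)}"

definition subtransversal :: "'v lgraph \<Rightarrow> 'v welem set \<Rightarrow> bool" where
  "subtransversal G S \<longleftrightarrow> S \<subseteq> W G \<and> (\<forall>v\<in>verts G. card (S \<inter> vtriple v) \<le> 1)"

text \<open>Entry (w,x) of the adjacency matrix A(G) over GF(2) (as a boolean).\<close>
definition Aent :: "'v lgraph \<Rightarrow> 'v \<Rightarrow> 'v \<Rightarrow> bool" where
  "Aent G w x = ((w = x \<and> x \<in> loops G) \<or> adj G w x)"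

text \<open>Column of IAS(G) labelled by an element of W(G); entry in row w.\<close>
fun col :: "'v lgraph \<Rightarrow> 'v welem \<Rightarrow> 'v \<Rightarrow> bool" where
  "col G (Phi, x) w = (w = x)"
| "col G (Chi, x) w = Aent G w x"
| "col G (Psi, x) w = (Aent G w x \<noteq> (w = x))"

text \<open>Linear independence over GF(2) of a set of columns: no nonempty subset
  sums to the zero vector (rows indexed by V(G)).\<close>
definition indep :: "'v lgraph \<Rightarrow> 'v welem set \<Rightarrow> bool" where
  "indep G T \<longleftrightarrow> finite T \<and>
     (\<forall>U\<subseteq>T. U \<noteq> {} \<longrightarrow> (\<exists>w\<in>verts G. odd (card {e\<in>U. col G e w})))"

definition rk :: "'v lgraph \<Rightarrow> 'v welem set \<Rightarrow> nat" where
  "rk G S = Max {card T | T. T \<subseteq> S \<and> indep G T}"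

definition zeta :: "'v lgraph \<Rightarrow> 'v \<Rightarrow> 'v welem set" where
  "zeta G v = {(if v \<in> loops G then Psi else Chi, v)} \<union> {(Phi, w) | w. w \<in> nbhd G v}"

definition loc_l :: "'v \<Rightarrow> 'v lgraph \<Rightarrow> 'v lgraph" where
  "loc_l v G = G\<lparr>loops := (if v \<in> loops G then loops G - {v} else insert v (loops G))\<rparr>"

definition loc_s :: "'v \<Rightarrow> 'v lgraph \<Rightarrow> 'v lgraph" where
  "loc_s v G = G\<lparr>adj := (\<lambda>a b. if a \<noteq> b \<and> a \<in> nbhd G v \<and> b \<in> nbhd G v
                                then \<not> adj G a b else adj G a b)\<rparr>"

definition loc_ns :: "'v \<Rightarrow> 'v lgraph \<Rightarrow> 'v lgraph" where
  "loc_ns v G = (loc_s v G)\<lparr>loops := (loops G - nbhd G v) \<union> (nbhd G v - loops G)\<rparr>"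

fun swapCP :: "tag \<Rightarrow> tag" where
  "swapCP Chi = Psi" | "swapCP Psi = Chi" | "swapCP Phi = Phi"
fun swapFP :: "tag \<Rightarrow> tag" where
  "swapFP Phi = Psi" | "swapFP Psi = Phi" | "swapFP Chi = Chi"
fun swapFC :: "tag \<Rightarrow> tag" where
  "swapFC Phi = Chi" | "swapFC Chi = Phi" | "swapFC Psi = Psi"

text \<open>Induced isomorphisms of the single operations (as maps on labels, applied
  in the graph G before the operation).\<close>
definition iso_l :: "'v \<Rightarrow> 'v welem \<Rightarrow> 'v welem" where
  "iso_l v e = (if snd e = v then (swapCP (fst e), snd e) else e)"

definition iso_ns :: "'v lgraph \<Rightarrow> 'v \<Rightarrow> 'v welem \<Rightarrow> 'v welem" where
  "iso_ns G v e = (if snd e = v then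
      ((if v \<in> loops G then swapFC else swapFP) (fst e), snd e) else e)"

definition iso_s :: "'v lgraph \<Rightarrow> 'v \<Rightarrow> 'v welem \<Rightarrow> 'v welem" where
  "iso_s G v e = (if snd e = v then
      ((if v \<in> loops G then swapFC else swapFP) (fst e), snd e)
    else if snd e \<in> nbhd G v then (swapCP (fst e), snd e) else e)"

text \<open>ind_iso G H beta: H is obtained from G by a finite sequence of local operations
  and beta is the induced isomorphism M[IAS(G)] -> M[IAS(H)] along that sequence.\<close>
inductive ind_iso :: "'v lgraph \<Rightarrow> 'v lgraph \<Rightarrow> ('v welem \<Rightarrow> 'v welem) \<Rightarrow> bool"
  for G where
  refl: "ind_iso G G id"
| step_l: "ind_iso G H \<beta> \<Longrightarrow> v \<in> verts H \<Longrightarrow> ind_iso G (loc_l v H) (iso_l v \<circ> \<beta>)"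
| step_s: "ind_iso G H \<beta> \<Longrightarrow> v \<in> verts H \<Longrightarrow> ind_iso G (loc_s v H) (iso_s H v \<circ> \<beta>)"
| step_ns: "ind_iso G H \<beta> \<Longrightarrow> v \<in> verts H \<Longrightarrow> ind_iso G (loc_ns v H) (iso_ns H v \<circ> \<beta>)"

definition locally_equivalent :: "'v lgraph \<Rightarrow> 'v lgraph \<Rightarrow> bool" where
  "locally_equivalent G H \<longleftrightarrow> (\<exists>\<beta>. ind_iso G H \<beta>)"

end

theory Submission
  imports Defs
begin

lemma odd_xor:
  assumes "finite U"
  shows "odd (card {e\<in>U. P e \<noteq> Q e}) = (odd (card {e\<in>U. P e}) \<noteq> odd (card {e\<in>U. Q e}))"
  using assms
proof (induction U rule: finite_induct)
  case empty then show ?case by simp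
next
  case (insert x F)
  have h: "\<And>R. {e\<in>insert x F. R e} = (if R x then insert x {e\<in>F. R e} else {e\<in>F. R e})" by auto
  have f: "\<And>R. finite {e\<in>F. R e}" using insert by simp
  have n: "\<And>R. x \<notin> {e\<in>F. R e}" using insert by simp
  show ?case using insert.IH f n unfolding h by (auto simp: card_insert_if)
qed

lemma odd_xor_and:
  assumes "finite U"
  shows "odd (card {e\<in>U. P e \<noteq> (Q e \<and> c)}) = (odd (card {e\<in>U. P e}) \<noteq> (odd (card {e\<in>U. Q e}) \<and> c))"
  using odd_xor[OF assms, of P "\<lambda>e. Q e \<and> c"] by (cases c) auto

lemma lin_indep:
  assumes v: "v \<in> verts H" "v \<notin> Nv" and inj: "inj_on f T" and V: "verts H' = verts H"
    and c: "\<forall>e\<in>T. \<forall>w. col H' (f e) w = (col H e w \<noteq> (col H e v \<and> w \<in> Nv))"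
  shows "indep H' (f ` T) = indep H T"
proof -
  have key: "odd (card {e\<in>f`U. col H' e w}) =
      (odd (card {e\<in>U. col H e w}) \<noteq> (odd (card {e\<in>U. col H e v}) \<and> w \<in> Nv))"
    if "U \<subseteq> T" "finite U" for U w
  proof -
    have "{e\<in>f`U. col H' e w} = f ` {e\<in>U. col H' (f e) w}" by auto
    moreover have "inj_on f {e\<in>U. col H' (f e) w}" using inj that(1) by (auto intro: inj_on_subset)
    ultimately have "card {e\<in>f`U. col H' e w} = card {e\<in>U. col H' (f e) w}" by (simp add: card_image)
    also have "{e\<in>U. col H' (f e) w} = {e\<in>U. col H e w \<noteq> (col H e v \<and> w \<in> Nv)}"
      using c that(1) by auto
    finally show ?thesis using odd_xor_and[OF that(2)] by simp
  qed
  have ex: "(\<exists>w\<in>verts H'. odd (card {e\<in>f`U. col H' e w})) = (\<exists>w\<in>verts H. odd (card {e\<in>U. col H e w}))"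
    if "U \<subseteq> T" "finite U" for U
    using key[OF that] v V by (metis (no_types, lifting))
  have fin: "finite (f ` T) = finite T" using inj finite_image_iff by blast
  show ?thesis
  proof
    assume a: "indep H' (f ` T)"
    then have fT: "finite T" using fin unfolding indep_def by simp
    show "indep H T" unfolding indep_def
    proof (intro conjI allI impI fT)
      fix U assume U: "U \<subseteq> T" "U \<noteq> {}"
      have "f ` U \<subseteq> f ` T" "f ` U \<noteq> {}" using U by auto
      then have "\<exists>w\<in>verts H'. odd (card {e\<in>f`U. col H' e w})" using a unfolding indep_def by blast
      then show "\<exists>w\<in>verts H. odd (card {e\<in>U. col H e w})" using ex[OF U(1)] U fT finite_subset by blast
    qed
  next
    assume a: "indep H T"
    then have fT: "finite T" unfolding indep_def by simp
    show "indep H' (f ` T)" unfolding indep_def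
    proof (intro conjI allI impI)
      show "finite (f ` T)" using fT by simp
      fix U' assume U': "U' \<subseteq> f ` T" "U' \<noteq> {}"
      then obtain U where U: "U \<subseteq> T" "U' = f ` U" by (meson subset_imageE)
      then have "U \<noteq> {}" using U' by auto
      then have "\<exists>w\<in>verts H. odd (card {e\<in>U. col H e w})" using a U unfolding indep_def by blast
      then show "\<exists>w\<in>verts H'. odd (card {e\<in>U'. col H' e w})" using ex[OF U(1)] U fT finite_subset by blast
    qed
  qed
qed

lemma lsg_irr: "lsg H \<Longrightarrow> \<not> adj H u u" by (simp add: lsg_def)
lemma lsg_sym: "lsg H \<Longrightarrow> adj H u w = adj H w u" by (auto simp: lsg_def)

lemma col_l:
  assumes "lsg H"
  shows "col (loc_l v H) (iso_l v e) w = (col H e w \<noteq> (col H e v \<and> w \<in> {}))"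
  using lsg_irr[OF assms, of v]
  by (cases e; rename_tac t x; case_tac t) (auto simp: loc_l_def iso_l_def Aent_def)

lemma col_s:
  assumes "lsg H"
  shows "col (loc_s v H) (iso_s H v e) w = (col H e w \<noteq> (col H e v \<and> w \<in> nbhd H v))"
  using lsg_irr[OF assms] lsg_sym[OF assms]
  by (cases e; rename_tac t x; case_tac t) (auto simp: loc_s_def iso_s_def Aent_def nbhd_def)

lemma col_ns:
  assumes "lsg H"
  shows "col (loc_ns v H) (iso_ns H v e) w = (col H e w \<noteq> (col H e v \<and> w \<in> nbhd H v))"
  using lsg_irr[OF assms] lsg_sym[OF assms]
  by (cases e; rename_tac t x; case_tac t) (auto simp: loc_ns_def loc_s_def iso_ns_def Aent_def nbhd_def)

lemma swapCP_inv[simp]: "swapCP (swapCP t) = t" by (cases t) auto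
lemma swapFP_inv[simp]: "swapFP (swapFP t) = t" by (cases t) auto
lemma swapFC_inv[simp]: "swapFC (swapFC t) = t" by (cases t) auto

lemma inj_iso_l: "inj (iso_l v)"
  by (rule inj_on_inverseI[of _ "iso_l v"]) (auto simp: iso_l_def)
lemma inj_iso_s: "inj (iso_s H v)"
  by (rule inj_on_inverseI[of _ "iso_s H v"]) (auto simp: iso_s_def)
lemma inj_iso_ns: "inj (iso_ns H v)"
  by (rule inj_on_inverseI[of _ "iso_ns H v"]) (auto simp: iso_ns_def)

lemma snd_iso[simp]: "snd (iso_l v e) = snd e" "snd (iso_s H v e) = snd e" "snd (iso_ns H v e) = snd e"
  by (auto simp: iso_l_def iso_s_def iso_ns_def)

lemma verts_loc[simp]: "verts (loc_l v H) = verts H" "verts (loc_s v H) = verts H" "verts (loc_ns v H) = verts H"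
  by (auto simp: loc_l_def loc_s_def loc_ns_def)

lemma lsg_loc_l: "lsg H \<Longrightarrow> v \<in> verts H \<Longrightarrow> lsg (loc_l v H)"
  by (auto simp: lsg_def loc_l_def)
lemma lsg_loc_s: "lsg H \<Longrightarrow> lsg (loc_s v H)"
  by (auto simp: lsg_def loc_s_def nbhd_def)
lemma lsg_loc_ns: "lsg H \<Longrightarrow> lsg (loc_ns v H)"
  by (auto simp: lsg_def loc_ns_def loc_s_def nbhd_def)

lemma nbhd_irr: "lsg H \<Longrightarrow> v \<notin> nbhd H v" by (simp add: nbhd_def lsg_def)

lemma ind_iso_props:
  assumes "ind_iso G H \<beta>" "lsg G"
  shows "lsg H \<and> verts H = verts G \<and> inj \<beta> \<and> (\<forall>e. snd (\<beta> e) = snd e) \<and>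
         (\<forall>T. T \<subseteq> W G \<longrightarrow> indep H (\<beta> ` T) = indep G T)"
  using assms
proof (induction rule: ind_iso.induct)
  case refl then show ?case by simp
next
  case (step_l H \<beta> v)
  then have ih: "lsg H" "verts H = verts G" "inj \<beta>" "\<forall>e. snd (\<beta> e) = snd e"
     "\<forall>T. T \<subseteq> W G \<longrightarrow> indep H (\<beta> ` T) = indep G T" by auto
  have "indep (loc_l v H) ((iso_l v \<circ> \<beta>) ` T) = indep G T" if "T \<subseteq> W G" for T
  proof -
    have "indep (loc_l v H) (iso_l v ` (\<beta> ` T)) = indep H (\<beta> ` T)"
      by (rule lin_indep[where Nv="{}"]) (use step_l.hyps inj_on_subset[OF inj_iso_l subset_UNIV] col_l[OF ih(1)] in \<open>auto intro: inj_on_subset\<close>)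
    then show ?thesis using ih(5) that by (simp add: image_comp)
  qed
  moreover have "lsg (loc_l v H)" by (rule lsg_loc_l[OF ih(1) step_l.hyps(2)])
  moreover have "inj (iso_l v \<circ> \<beta>)" by (rule inj_compose[OF inj_iso_l ih(3)])
  ultimately show ?case using ih by (auto simp: comp_def)
next
  case (step_s H \<beta> v)
  then have ih: "lsg H" "verts H = verts G" "inj \<beta>" "\<forall>e. snd (\<beta> e) = snd e"
     "\<forall>T. T \<subseteq> W G \<longrightarrow> indep H (\<beta> ` T) = indep G T" by auto
  have "indep (loc_s v H) ((iso_s H v \<circ> \<beta>) ` T) = indep G T" if "T \<subseteq> W G" for T
  proof -
    have "indep (loc_s v H) (iso_s H v ` (\<beta> ` T)) = indep H (\<beta> ` T)"
      by (rule lin_indep[where Nv="nbhd H v"]) (use step_s.hyps inj_on_subset[OF inj_iso_s subset_UNIV] col_s[OF ih(1)] nbhd_irr[OF ih(1)] in \<open>auto intro: inj_on_subset\<close>)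
    then show ?thesis using ih(5) that by (simp add: image_comp)
  qed
  moreover have "lsg (loc_s v H)" by (rule lsg_loc_s[OF ih(1)])
  moreover have "inj (iso_s H v \<circ> \<beta>)" by (rule inj_compose[OF inj_iso_s ih(3)])
  ultimately show ?case using ih by (auto simp: comp_def)
next
  case (step_ns H \<beta> v)
  then have ih: "lsg H" "verts H = verts G" "inj \<beta>" "\<forall>e. snd (\<beta> e) = snd e"
     "\<forall>T. T \<subseteq> W G \<longrightarrow> indep H (\<beta> ` T) = indep G T" by auto
  have "indep (loc_ns v H) ((iso_ns H v \<circ> \<beta>) ` T) = indep G T" if "T \<subseteq> W G" for T
  proof -
    have "indep (loc_ns v H) (iso_ns H v ` (\<beta> ` T)) = indep H (\<beta> ` T)"
      by (rule lin_indep[where Nv="nbhd H v"]) (use step_ns.hyps inj_on_subset[OF inj_iso_ns subset_UNIV] col_ns[OF ih(1)] nbhd_irr[OF ih(1)] in \<open>auto intro: inj_on_subset\<close>)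
    then show ?thesis using ih(5) that by (simp add: image_comp)
  qed
  moreover have "lsg (loc_ns v H)" by (rule lsg_loc_ns[OF ih(1)])
  moreover have "inj (iso_ns H v \<circ> \<beta>)" by (rule inj_compose[OF inj_iso_ns ih(3)])
  ultimately show ?case using ih by (auto simp: comp_def)
qed

lemma rk_iso:
  assumes "ind_iso G H \<beta>" "lsg G" "S \<subseteq> W G"
  shows "rk H (\<beta> ` S) = rk G S" "card (\<beta> ` S) = card S"
proof -
  note P = ind_iso_props[OF assms(1,2)]
  have "{card T | T. T \<subseteq> \<beta> ` S \<and> indep H T} = {card T | T. T \<subseteq> S \<and> indep G T}"
  proof (intro set_eqI iffI)
    fix n assume "n \<in> {card T | T. T \<subseteq> \<beta> ` S \<and> indep H T}"
    then obtain T where T: "n = card T" "T \<subseteq> \<beta> ` S" "indep H T" by auto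
    then obtain U where U: "U \<subseteq> S" "T = \<beta> ` U" by (meson subset_imageE)
    have "card T = card U" using U P by (meson card_image inj_on_subset subset_UNIV)
    moreover have "indep G U" using T U P assms(3) by auto
    ultimately show "n \<in> {card T | T. T \<subseteq> S \<and> indep G T}" using T U by auto
  next
    fix n assume "n \<in> {card T | T. T \<subseteq> S \<and> indep G T}"
    then obtain U where U: "n = card U" "U \<subseteq> S" "indep G U" by auto
    have "card (\<beta> ` U) = card U" using P by (meson card_image inj_on_subset subset_UNIV)
    moreover have "indep H (\<beta> ` U)" using U P assms(3) by auto
    ultimately show "n \<in> {card T | T. T \<subseteq> \<beta> ` S \<and> indep H T}" using U by (auto intro!: exI[of _ "\<beta> ` U"])
  qed
  then show "rk H (\<beta> ` S) = rk G S" by (simp add: rk_def)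
  show "card (\<beta> ` S) = card S" using P by (meson card_image inj_on_subset subset_UNIV)
qed

lemma indep_card_le:
  assumes ind: "indep H T" and supp: "\<forall>e\<in>T. \<forall>w\<in>verts H. col H e w \<longrightarrow> w \<in> P" and fP: "finite P"
  shows "card T \<le> card P"
proof -
  have fT: "finite T" using ind by (simp add: indep_def)
  define g where "g U = {w\<in>P. odd (card {e\<in>U. col H e w})}" for U
  have inj: "inj_on g (Pow T)"
  proof (rule inj_onI, rule ccontr)
    fix U1 U2 assume U: "U1 \<in> Pow T" "U2 \<in> Pow T" "g U1 = g U2" "U1 \<noteq> U2"
    define D where "D = (U1 - U2) \<union> (U2 - U1)"
    have "D \<subseteq> T" "D \<noteq> {}" using U by (auto simp: D_def)
    then obtain w where w: "w \<in> verts H" "odd (card {e\<in>D. col H e w})" using ind unfolding indep_def by blast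
    have x: "odd (card {e\<in>T. (e \<in> U1 \<and> col H e w) \<noteq> (e \<in> U2 \<and> col H e w)}) =
        (odd (card {e\<in>T. e \<in> U1 \<and> col H e w}) \<noteq> odd (card {e\<in>T. e \<in> U2 \<and> col H e w}))"
      by (rule odd_xor[OF fT])
    have e1: "{e\<in>T. (e \<in> U1 \<and> col H e w) \<noteq> (e \<in> U2 \<and> col H e w)} = {e\<in>D. col H e w}"
      using U by (auto simp: D_def)
    have e2: "{e\<in>T. e \<in> U1 \<and> col H e w} = {e\<in>U1. col H e w}" "{e\<in>T. e \<in> U2 \<and> col H e w} = {e\<in>U2. col H e w}"
      using U by auto
    have od: "odd (card {e\<in>U1. col H e w}) \<noteq> odd (card {e\<in>U2. col H e w})" using x e1 e2 w by simp
    show False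
    proof (cases "w \<in> P")
      case True then show False using U(3) od unfolding g_def by blast
    next
      case False
      then have "\<forall>e\<in>D. \<not> col H e w" using supp w(1) \<open>D \<subseteq> T\<close> by blast
      then have "{e\<in>D. col H e w} = {}" by blast
      then show False using w(2) by (metis card.empty even_zero)
    qed
  qed
  have "g ` Pow T \<subseteq> Pow P" by (auto simp: g_def)
  then have "card (Pow T) \<le> card (Pow P)"
    using card_inj_on_le[OF inj] fP by auto
  then have "(2::nat) ^ card T \<le> 2 ^ card P" using fT fP by (simp add: card_Pow)
  then show ?thesis by simp
qed

definition zelt :: "'v lgraph \<Rightarrow> 'v \<Rightarrow> 'v welem" where
  "zelt H x = (if x \<in> loops H then Psi else Chi, x)"

lemma zeta_zelt: "zeta H x = {zelt H x} \<union> {(Phi, w) | w. w \<in> nbhd H x}"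
  by (simp add: zeta_def zelt_def)

lemma zelt_neq[simp]: "zelt H x \<noteq> (Phi, w)" "(Phi, w) \<noteq> zelt H x" by (auto simp: zelt_def)

lemma col_zelt: "lsg H \<Longrightarrow> col H (zelt H x) w = adj H x w"
  by (auto simp: zelt_def Aent_def lsg_def)

lemma nullity_shape:
  assumes lsg: "lsg H" and XV: "X \<subseteq> verts H" and st: "stable H X"
    and lo: "(\<Union>x\<in>X. zeta H x) \<subseteq> T"
    and up: "T \<subseteq> {(Phi, v) | v. v \<in> verts H - X} \<union> (\<Union>x\<in>X. zeta H x)"
  shows "card T - rk H T = card X"
proof -
  define P0 where "P0 = {v. (Phi, v) \<in> T}"
  define Ph where "Ph = (\<lambda>v. (Phi, v)) ` P0"
  define Z where "Z = zelt H ` X"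
  have nbV: "nbhd H x \<subseteq> verts H" for x using lsg by (auto simp: nbhd_def lsg_def)
  have nbP: "nbhd H x \<subseteq> P0" if "x \<in> X" for x using lo that by (auto simp: P0_def zeta_def)
  have P0V: "P0 \<subseteq> verts H"
  proof
    fix x assume "x \<in> P0"
    then have "(Phi,x) \<in> {(Phi, v) | v. v \<in> verts H - X} \<union> (\<Union>x\<in>X. zeta H x)" using up by (auto simp: P0_def)
    then show "x \<in> verts H" using nbV by (auto simp: zeta_def split: if_splits)
  qed
  have P0X: "P0 \<inter> X = {}"
  proof (rule ccontr)
    assume "P0 \<inter> X \<noteq> {}"
    then obtain x where x: "x \<in> X" "(Phi, x) \<in> T" by (auto simp: P0_def)
    have "(Phi,x) \<in> {(Phi, v) | v. v \<in> verts H - X} \<union> (\<Union>x\<in>X. zeta H x)" using up x by auto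
    then obtain y where "y \<in> X" "x \<in> nbhd H y" using x(1) by (auto simp: zeta_def split: if_splits)
    then show False using st x by (auto simp: stable_def nbhd_def)
  qed
  have fX: "finite X" using XV lsg finite_subset by (auto simp: lsg_def)
  have fP0: "finite P0" using P0V lsg finite_subset by (auto simp: lsg_def)
  have TPZ: "T = Ph \<union> Z"
  proof
    show "T \<subseteq> Ph \<union> Z"
    proof
      fix e assume e: "e \<in> T"
      then consider "fst e = Phi" | x where "x \<in> X" "e = zelt H x"
        using up by (auto simp: zeta_zelt)
      then show "e \<in> Ph \<union> Z"
      proof cases
        case 1 then show ?thesis using e by (cases e) (auto simp: Ph_def P0_def)
      qed (auto simp: Z_def)
    qed
    show "Ph \<union> Z \<subseteq> T" using lo by (auto simp: Ph_def P0_def Z_def zeta_zelt)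
  qed
  have disj: "Ph \<inter> Z = {}" by (auto simp: Ph_def Z_def)
  have cPh: "card Ph = card P0" by (simp add: Ph_def card_image inj_on_def)
  have cZ: "card Z = card X" unfolding Z_def by (rule card_image) (auto simp: inj_on_def zelt_def)
  have fPh: "finite Ph" "finite Z" using fP0 fX by (auto simp: Ph_def Z_def)
  have cT: "card T = card P0 + card X" using TPZ disj cPh cZ fPh by (simp add: card_Un_disjoint)
  have indPh: "indep H Ph" unfolding indep_def
  proof (intro conjI allI impI)
    show "finite Ph" by fact
    fix U assume U: "U \<subseteq> Ph" "U \<noteq> {}"
    then obtain u where u: "(Phi, u) \<in> U" "u \<in> P0" by (auto simp: Ph_def)
    have "{e\<in>U. col H e u} = {(Phi, u)}" using U u by (auto simp: Ph_def)
    then show "\<exists>w\<in>verts H. odd (card {e\<in>U. col H e w})" using u P0V by (intro bexI[of _ u]) auto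
  qed
  have supp: "\<forall>e\<in>T'. \<forall>w\<in>verts H. col H e w \<longrightarrow> w \<in> P0" if "T' \<subseteq> T" for T'
  proof (intro ballI impI)
    fix e w assume e: "e \<in> T'" and w: "w \<in> verts H" "col H e w"
    have "e \<in> Ph \<union> Z" using e that TPZ by auto
    then show "w \<in> P0"
    proof
      assume "e \<in> Ph" then show ?thesis using w by (auto simp: Ph_def)
    next
      assume "e \<in> Z"
      then obtain x where x: "x \<in> X" "e = zelt H x" by (auto simp: Z_def)
      then have "w \<in> nbhd H x" using w col_zelt[OF lsg] by (auto simp: nbhd_def)
      then show ?thesis using nbP x by auto
    qed
  qed
  have rk: "rk H T = card P0"
  proof -
    let ?A = "{card T' | T'. T' \<subseteq> T \<and> indep H T'}"
    have "card P0 \<in> ?A" using indPh cPh TPZ by (auto intro!: exI[of _ Ph])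
    moreover have "\<forall>n\<in>?A. n \<le> card P0" using indep_card_le supp fP0 by blast
    moreover have "finite ?A"
      by (rule finite_subset[of _ "{..card P0}"]) (use calculation in auto)
    ultimately show ?thesis unfolding rk_def by (meson Max_eqI)
  qed
  show ?thesis using cT rk by simp
qed

lemma ind_iso_trans: "ind_iso B C g \<Longrightarrow> ind_iso A B f \<Longrightarrow> ind_iso A C (g \<circ> f)"
proof (induction rule: ind_iso.induct)
  case refl then show ?case by simp
next
  case (step_l H \<beta> v) then show ?case using ind_iso.step_l[of A H "\<beta> \<circ> f" v] by (simp add: comp_def)
next
  case (step_s H \<beta> v) then show ?case using ind_iso.step_s[of A H "\<beta> \<circ> f" v] by (simp add: comp_def)
next
  case (step_ns H \<beta> v) then show ?case using ind_iso.step_ns[of A H "\<beta> \<circ> f" v] by (simp add: comp_def)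
qed

definition kap :: "'v lgraph \<Rightarrow> 'v welem \<Rightarrow> bool" where
  "kap H e \<longleftrightarrow> fst e \<noteq> Phi \<and> e \<noteq> zelt H (snd e)"

definition meas :: "'v lgraph \<Rightarrow> 'v welem set \<Rightarrow> nat" where
  "meas H T = 2 * card (verts H - {v. (Phi, v) \<in> T}) + (if \<exists>e\<in>T. kap H e then 0 else 1)"

definition uniq :: "'v welem set \<Rightarrow> bool" where
  "uniq T \<longleftrightarrow> (\<forall>e\<in>T. \<forall>e'\<in>T. snd e = snd e' \<longrightarrow> e = e')"

definition goal :: "'v lgraph \<Rightarrow> 'v welem set \<Rightarrow> bool" where
  "goal H T \<longleftrightarrow> (\<exists>H' \<gamma> X. ind_iso H H' \<gamma> \<and> X \<subseteq> verts H' \<and> stable H' X \<and>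
      (\<Union>x\<in>X. zeta H' x) \<subseteq> \<gamma> ` T \<and>
      \<gamma> ` T \<subseteq> {(Phi, v) | v. v \<in> verts H' - X} \<union> (\<Union>x\<in>X. zeta H' x))"

lemma loops_loc_s[simp]: "loops (loc_s v H) = loops H" by (simp add: loc_s_def)

lemma zelt_loc_s[simp]: "zelt (loc_s v H) x = zelt H x" by (simp add: zelt_def)

lemma step_goal:
  fixes H :: "'v lgraph"
  assumes lsg: "lsg H" and T: "T \<subseteq> W H" "uniq T" and v: "v \<in> verts H"
    and IH: "\<And>(H' :: 'v lgraph) T'. meas H' T' < meas H T \<Longrightarrow> lsg H' \<Longrightarrow> T' \<subseteq> W H' \<Longrightarrow> uniq T' \<Longrightarrow> goal H' T'"
    and lt: "meas (loc_s v H) (iso_s H v ` T) < meas H T"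
  shows "goal H T"
proof -
  let ?H1 = "loc_s v H" and ?T1 = "iso_s H v ` T"
  have "lsg ?H1" by (rule lsg_loc_s[OF lsg])
  moreover have "?T1 \<subseteq> W ?H1"
  proof
    fix e' assume "e' \<in> ?T1"
    then obtain e where e: "e \<in> T" "e' = iso_s H v e" by blast
    then have "snd e \<in> verts H" using T(1) by (auto simp: W_def mem_Times_iff)
    then show "e' \<in> W ?H1" using e(2) snd_iso(2)[of H v e] by (simp add: W_def mem_Times_iff)
  qed
  moreover have "uniq ?T1" using T(2) inj_iso_s[of H v] unfolding uniq_def
    by (auto dest: injD)
  ultimately have "goal ?H1 ?T1" by (rule IH[OF lt])
  then obtain H' \<gamma> X where g: "ind_iso ?H1 H' \<gamma>" "X \<subseteq> verts H'" "stable H' X"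
      "(\<Union>x\<in>X. zeta H' x) \<subseteq> \<gamma> ` ?T1"
      "\<gamma> ` ?T1 \<subseteq> {(Phi, v) | v. v \<in> verts H' - X} \<union> (\<Union>x\<in>X. zeta H' x)"
    unfolding goal_def by (elim exE conjE) (rule that; assumption)
  have "ind_iso H ?H1 (iso_s H v \<circ> id)" using ind_iso.step_s[OF ind_iso.refl v] .
  then have "ind_iso H H' (\<gamma> \<circ> iso_s H v)" using ind_iso_trans[OF g(1)] by simp
  then show ?thesis unfolding goal_def using g by (intro exI[of _ H'] exI[of _ "\<gamma> \<circ> iso_s H v"] exI[of _ X]) (simp add: image_comp)
qed

lemma exist_main:
  "lsg H \<Longrightarrow> T \<subseteq> W H \<Longrightarrow> uniq T \<Longrightarrow> goal H T"
proof (induction "meas H T" arbitrary: H T rule: less_induct)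
  case less
  note IH = less.hyps
  have lsg: "lsg H" and TW: "T \<subseteq> W H" and un: "uniq T" by fact+
  have fV: "finite (verts H)" using lsg by (simp add: lsg_def)
  define P where "P = {v. (Phi, v) \<in> T}"
  have sw: "\<And>t x. (t, x) \<in> T \<Longrightarrow> x \<in> verts H" using TW by (auto simp: W_def)
  show ?case
  proof (cases "\<exists>e\<in>T. kap H e")
    case True
    then obtain e where e: "e \<in> T" "kap H e" by blast
    obtain t v where ev: "e = (t, v)" by (cases e)
    have vV: "v \<in> verts H" using e ev sw by blast
    let ?T1 = "iso_s H v ` T"
    have sub: "insert v P \<subseteq> {u. (Phi, u) \<in> ?T1}"
    proof
      fix u assume "u \<in> insert v P"
      then show "u \<in> {u. (Phi, u) \<in> ?T1}"
      proof
        assume "u = v"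
        have "iso_s H v e = (Phi, v)" using e(2) ev
          by (cases t) (auto simp: kap_def zelt_def iso_s_def split: if_splits)
        then have "(Phi, v) \<in> ?T1" using e(1) by (metis image_eqI)
        then show ?thesis using \<open>u = v\<close> by simp
      next
        assume "u \<in> P"
        then have uT: "(Phi, u) \<in> T" by (simp add: P_def)
        have "u \<noteq> v"
        proof
          assume "u = v"
          then have "e = (Phi, u)" using un uT e(1) ev unfolding uniq_def by (metis snd_conv)
          then show False using e(2) by (simp add: kap_def)
        qed
        then have "iso_s H v (Phi, u) = (Phi, u)" by (simp add: iso_s_def)
        then have "(Phi, u) \<in> ?T1" using uT by (metis image_eqI)
        then show ?thesis by simp
      qed
    qed
    have vP: "v \<notin> P"
    proof
      assume "v \<in> P"
      then have "e = (Phi, v)" using un e(1) ev unfolding uniq_def P_def by (metis mem_Collect_eq snd_conv)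
      then show False using e(2) by (simp add: kap_def)
    qed
    have "verts H - {u. (Phi, u) \<in> ?T1} \<subset> verts H - P" using sub vP vV by blast
    then have "card (verts H - {u. (Phi, u) \<in> ?T1}) < card (verts H - P)"
      using fV by (meson finite_Diff psubset_card_mono)
    then have "meas (loc_s v H) ?T1 < meas H T" unfolding meas_def P_def using True by auto
    then show ?thesis using step_goal[OF lsg TW un vV] IH by blast
  next
    case noK: False
    show ?thesis
    proof (cases "\<exists>x w. zelt H x \<in> T \<and> adj H x w \<and> (Phi, w) \<notin> T")
      case True
      then obtain x w where xw: "zelt H x \<in> T" "adj H x w" "(Phi, w) \<notin> T" by blast
      have wV: "w \<in> verts H" using lsg xw(2) by (simp add: lsg_def)
      let ?T1 = "iso_s H w ` T"
      have sub: "P \<subseteq> {u. (Phi, u) \<in> ?T1}"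
      proof
        fix u assume "u \<in> P"
        then have uT: "(Phi, u) \<in> T" by (simp add: P_def)
        then have "u \<noteq> w" using xw by auto
        then have "iso_s H w (Phi, u) = (Phi, u)" by (simp add: iso_s_def)
        then have "(Phi, u) \<in> ?T1" using uT by (metis image_eqI)
        then show "u \<in> {u. (Phi, u) \<in> ?T1}" by simp
      qed
      have "card (verts H - {u. (Phi, u) \<in> ?T1}) \<le> card (verts H - P)"
        using sub fV by (intro card_mono) auto
      moreover have "kap (loc_s w H) (iso_s H w (zelt H x))"
      proof -
        have "x \<in> nbhd H w" "x \<noteq> w" using xw(2) lsg_sym[OF lsg] lsg_irr[OF lsg] by (auto simp: nbhd_def)
        then show ?thesis by (auto simp: kap_def iso_s_def zelt_def)
      qed
      moreover have "iso_s H w (zelt H x) \<in> ?T1" using xw(1) by (metis image_eqI)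
      ultimately have "meas (loc_s w H) ?T1 = 2 * card (verts H - {u. (Phi, u) \<in> ?T1})"
          "meas H T = 2 * card (verts H - P) + 1"
        unfolding meas_def P_def using noK by auto
      with \<open>card (verts H - {u. (Phi, u) \<in> ?T1}) \<le> card (verts H - P)\<close>
      have "meas (loc_s w H) ?T1 < meas H T" by simp
      then show ?thesis using step_goal[OF lsg TW un wV] IH by blast
    next
      case noB: False
      define X where "X = {x. zelt H x \<in> T}"
      have XV: "X \<subseteq> verts H" using sw by (auto simp: X_def zelt_def)
      have st: "stable H X" unfolding stable_def
      proof (intro ballI notI)
        fix x y assume xy: "x \<in> X" "y \<in> X" "adj H x y"
        then have "(Phi, y) \<in> T" using noB by (auto simp: X_def)
        moreover have "zelt H y \<in> T" using xy by (simp add: X_def)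
        ultimately show False using un unfolding uniq_def by (metis snd_conv zelt_def zelt_neq(2))
      qed
      have lo: "(\<Union>x\<in>X. zeta H x) \<subseteq> id ` T"
        using noB by (auto simp: zeta_zelt X_def nbhd_def)
      have up: "id ` T \<subseteq> {(Phi, v) | v. v \<in> verts H - X} \<union> (\<Union>x\<in>X. zeta H x)"
      proof
        fix e assume "e \<in> id ` T"
        then have eT: "e \<in> T" by simp
        obtain t u where eu: "e = (t, u)" by (cases e)
        show "e \<in> {(Phi, v) | v. v \<in> verts H - X} \<union> (\<Union>x\<in>X. zeta H x)"
        proof (cases "t = Phi")
          case True
          have "u \<notin> X"
          proof
            assume "u \<in> X"
            then have "zelt H u \<in> T" by (simp add: X_def)
            then show False using un eT eu True unfolding uniq_def by (metis snd_conv zelt_def zelt_neq(2))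
          qed
          then show ?thesis using True eu eT sw by auto
        next
          case False
          then have "e = zelt H u" using noK eT eu by (auto simp: kap_def)
          then have "u \<in> X" "e \<in> zeta H u" using eT by (auto simp: X_def zeta_zelt)
          then show ?thesis by blast
        qed
      qed
      show ?thesis unfolding goal_def using ind_iso.refl[of H] XV st lo up by blast
    qed
  qed
qed

lemma subtrans_uniq:
  assumes "subtransversal G S" shows "uniq S"
  unfolding uniq_def
proof (intro ballI impI)
  fix e e' assume e: "e \<in> S" "e' \<in> S" "snd e = snd e'"
  obtain t v where ev: "e = (t, v)" by (cases e)
  obtain t' where ev': "e' = (t', v)" using e(3) ev by (cases e') auto
  have vV: "v \<in> verts G" using assms e(1) ev by (auto simp: subtransversal_def W_def)
  have c: "card (S \<inter> vtriple v) \<le> Suc 0" using assms vV by (simp add: subtransversal_def)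
  have f: "finite (S \<inter> vtriple v)" by (simp add: vtriple_def)
  have "e \<in> S \<inter> vtriple v" using e ev by (cases t) (auto simp: vtriple_def)
  moreover have "e' \<in> S \<inter> vtriple v" using e ev' by (cases t') (auto simp: vtriple_def)
  ultimately
  show "e = e'" using c f card_le_Suc0_iff_eq by blast
qed

theorem corollary4p4:
  fixes G :: "'v lgraph" and S :: "'v welem set" and \<nu> :: nat
  assumes "lsg G" and "subtransversal G S"
  shows "\<nu> = card S - rk G S \<longleftrightarrow>
    (\<exists>H X \<beta>. lsg H \<and> locally_equivalent G H \<and> ind_iso G H \<beta> \<and>
       X \<subseteq> verts H \<and> stable H X \<and> card X = \<nu> \<and>
       (\<Union>x\<in>X. zeta H x) \<subseteq> \<beta> ` S \<and>
       \<beta> ` S \<subseteq> {(Phi, v) | v. v \<in> verts H - X} \<union> (\<Union>x\<in>X. zeta H x))"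
proof -
  have SW: "S \<subseteq> W G" using assms(2) by (simp add: subtransversal_def)
  have nul: "card X = card S - rk G S"
    if "ind_iso G H \<beta>" "X \<subseteq> verts H" "stable H X" "(\<Union>x\<in>X. zeta H x) \<subseteq> \<beta> ` S"
       "\<beta> ` S \<subseteq> {(Phi, v) | v. v \<in> verts H - X} \<union> (\<Union>x\<in>X. zeta H x)" for H X \<beta>
  proof -
    have "lsg H" using ind_iso_props[OF that(1) assms(1)] by simp
    then have "card (\<beta> ` S) - rk H (\<beta> ` S) = card X" using nullity_shape that(2-5) by blast
    then show ?thesis using rk_iso[OF that(1) assms(1) SW] by simp
  qed
  obtain H \<beta> X where g: "ind_iso G H \<beta>" "X \<subseteq> verts H" "stable H X" "(\<Union>x\<in>X. zeta H x) \<subseteq> \<beta> ` S"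
       "\<beta> ` S \<subseteq> {(Phi, v) | v. v \<in> verts H - X} \<union> (\<Union>x\<in>X. zeta H x)"
    using exist_main[OF assms(1) SW subtrans_uniq[OF assms(2)]] unfolding goal_def by (elim exE conjE) (rule that; assumption)
  have lH: "lsg H" using ind_iso_props[OF g(1) assms(1)] by simp
  show ?thesis
  proof
    assume "\<nu> = card S - rk G S"
    then have "card X = \<nu>" using nul[OF g] by simp
    then show "\<exists>H X \<beta>. lsg H \<and> locally_equivalent G H \<and> ind_iso G H \<beta> \<and>
       X \<subseteq> verts H \<and> stable H X \<and> card X = \<nu> \<and>
       (\<Union>x\<in>X. zeta H x) \<subseteq> \<beta> ` S \<and>
       \<beta> ` S \<subseteq> {(Phi, v) | v. v \<in> verts H - X} \<union> (\<Union>x\<in>X. zeta H x)"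
      using g lH unfolding locally_equivalent_def by blast
  next
    assume "\<exists>H X \<beta>. lsg H \<and> locally_equivalent G H \<and> ind_iso G H \<beta> \<and>
       X \<subseteq> verts H \<and> stable H X \<and> card X = \<nu> \<and>
       (\<Union>x\<in>X. zeta H x) \<subseteq> \<beta> ` S \<and>
       \<beta> ` S \<subseteq> {(Phi, v) | v. v \<in> verts H - X} \<union> (\<Union>x\<in>X. zeta H x)"
    then obtain H' X' \<beta>' where h: "ind_iso G H' \<beta>'" "X' \<subseteq> verts H'" "stable H' X'" "card X' = \<nu>"
       "(\<Union>x\<in>X'. zeta H' x) \<subseteq> \<beta>' ` S"
       "\<beta>' ` S \<subseteq> {(Phi, v) | v. v \<in> verts H' - X'} \<union> (\<Union>x\<in>X'. zeta H' x)" by blast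
    show "\<nu> = card S - rk G S" using nul[OF h(1,2,3,5,6)] h(4) by simp
  qed
qed

end
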